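(* For each class $X\in\{\mathrm{sing},\mathrm{cont},\mathrm{op},\mathrm{clos}\}$ choose independently a pair $(\alpha_X,\beta_X)\in\{(2,1),(1,2)\}$. Then for every $n\ge1$, $$\sum_{\sigma\in S_n} q^{\,\mathrm{run}(\sigma)-1+\sum_{X}\left(\alpha_X\,\mathrm{lsg}(X)(\sigma)+\beta_X\,\mathrm{rsg}(X)(\sigma)\right)}=[n]_q!.$$
   Context: $[n]_q=\frac{1-q^n}{1-q}$, $[n]_q!=[n]_q\cdots[1]_q$. A permutation $\sigma\in S_n$ is written as the word $\sigma(1)\cdots\sigma(n)$; its runs are the maximal contiguous increasing segments, $\mathrm{run}(\sigma)$ is their number. A run of length $\ge2$ is proper, of length 1 is a singleton run. Classes: $\mathrm{op}(\sigma)$ = first elements of proper runs, $\mathrm{clos}(\sigma)$ = last elements of proper runs, $\mathrm{sing}(\sigma)$ = elements forming singleton runs, $\mathrm{cont}(\sigma)$ = all other elements. For $i\in\{1,\dots,n\}$, $\mathrm{lsg}(i)$ is the number of runs lying strictly to the left of $i$ (not containing $i$) that contain both an element smaller and an element greater than $i$; $\mathrm{rsg}(i)$ is the analogous number to the right. $\mathrm{lsg}(X)(\sigma)=\sum_{i\in X(\sigma)}\mathrm{lsg}(i)$, $\mathrm{rsg}(X)(\sigma)=\sum_{i\in X(\sigma)}\mathrm{rsg}(i)$. *)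

theory Defs
  imports Main "HOL-Combinatorics.Multiset_Permutations"
begin

text \<open>q-integers and q-factorial, written division-free:
  [n]_q = 1 + q + ... + q^(n-1) = (1 - q^n)/(1 - q).\<close>
definition q_int :: "nat \<Rightarrow> 'a::comm_ring_1 \<Rightarrow> 'a" where
  "q_int n q = (\<Sum>j<n. q ^ j)"

definition q_fact :: "nat \<Rightarrow> 'a::comm_ring_1 \<Rightarrow> 'a" where
  "q_fact n q = (\<Prod>k=1..n. q_int k q)"

fun runs :: "nat list \<Rightarrow> nat list list" where
  "runs [] = []"
| "runs [x] = [[x]]"
| "runs (x # y # xs) =
     (if x < y then (let R = runs (y # xs) in (x # hd R) # tl R)
      else [x] # runs (y # xs))"

definition run :: "nat list \<Rightarrow> nat" where
  "run \<sigma> = length (runs \<sigma>)"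

definition run_idx :: "nat list \<Rightarrow> nat \<Rightarrow> nat" where
  "run_idx \<sigma> i = (THE j. j < length (runs \<sigma>) \<and> i \<in> set (runs \<sigma> ! j))"

datatype cls = Sing | Cont | Op | Clos

definition cls_of :: "nat list \<Rightarrow> nat \<Rightarrow> cls" where
  "cls_of \<sigma> i = (let r = runs \<sigma> ! run_idx \<sigma> i in
     if length r = 1 then Sing
     else if i = hd r then Op
     else if i = last r then Clos
     else Cont)"

definition separates :: "nat list \<Rightarrow> nat \<Rightarrow> bool" where
  "separates r i \<longleftrightarrow> (\<exists>a\<in>set r. a < i) \<and> (\<exists>b\<in>set r. i < b)"

definition lsg :: "nat list \<Rightarrow> nat \<Rightarrow> nat" where
  "lsg \<sigma> i = card {j. j < run_idx \<sigma> i \<and> separates (runs \<sigma> ! j) i}"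

definition rsg :: "nat list \<Rightarrow> nat \<Rightarrow> nat" where
  "rsg \<sigma> i = card {j. run_idx \<sigma> i < j \<and> j < length (runs \<sigma>) \<and> separates (runs \<sigma> ! j) i}"

definition lsg_cls :: "cls \<Rightarrow> nat list \<Rightarrow> nat" where
  "lsg_cls X \<sigma> = (\<Sum>i\<in>{i\<in>set \<sigma>. cls_of \<sigma> i = X}. lsg \<sigma> i)"

definition rsg_cls :: "cls \<Rightarrow> nat list \<Rightarrow> nat" where
  "rsg_cls X \<sigma> = (\<Sum>i\<in>{i\<in>set \<sigma>. cls_of \<sigma> i = X}. rsg \<sigma> i)"

end

theory Submission
  imports Defs
begin


definition qx :: "'a::comm_ring_1 \<Rightarrow> nat \<Rightarrow> 'a" where
  "qx q j = (if j = 1 then 1 else q ^ j)"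

fun EE :: "'a::comm_ring_1 \<Rightarrow> nat \<Rightarrow> nat \<Rightarrow> 'a" where
  "EE q 0 h = (if h = 0 then 1 else 0)"
| "EE q (Suc m) 0 = 1"
| "EE q (Suc m) (Suc h) = EE q m (Suc h) + qx q (Suc m) * EE q m h"

definition EEp :: "'a::comm_ring_1 \<Rightarrow> nat \<Rightarrow> nat \<Rightarrow> 'a" where
  "EEp q m h = (case h of 0 \<Rightarrow> 0 | Suc k \<Rightarrow> EE q m k)"

lemma EE_0 [simp]: "EE q m 0 = 1"
  by (cases m) auto

lemma EE_Suc_gen: "EE q (Suc m) h = EE q m h + qx q (Suc m) * EEp q m h"
  by (cases h) (auto simp: EEp_def)

lemma q_int_Suc: "q_int (Suc k) q = q_int k q + q ^ k"
  by (simp add: q_int_def)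

lemma q_int_0 [simp]: "q_int 0 q = 0"
  by (simp add: q_int_def)

lemma q_int_Suc': "q_int (Suc k) q = 1 + q * q_int k q"
  unfolding q_int_def by (subst sum.lessThan_Suc_shift) (simp add: sum_distrib_left)

lemma q_int_mul: "(1 - q) * q_int k q = 1 - q ^ k"
proof (induction k)
  case 0 then show ?case by simp
next
  case (Suc k)
  have "(1 - q) * q_int (Suc k) q = (1 - q) * q_int k q + (1 - q) * q ^ k"
    by (simp add: q_int_Suc ring_distribs)
  also have "\<dots> = 1 - q ^ Suc k" using Suc by (simp add: algebra_simps)
  finally show ?case .
qed

lemma EE_1_Suc: "EE q (Suc 0) (Suc (Suc h)) = 0"
  by simp

lemma EE_ge: "h > m \<Longrightarrow> EE q m h = 0"
proof (induction m arbitrary: h)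
  case 0 then show ?case by simp
next
  case (Suc m)
  then obtain h0 where "h = Suc h0" by (cases h) auto
  with Suc show ?case by auto
qed

definition qp :: "'a::comm_ring_1 \<Rightarrow> nat \<Rightarrow> 'a" where
  "qp q h = (if h = 0 then 0 else q ^ (h - 1))"

definition EEpp :: "'a::comm_ring_1 \<Rightarrow> nat \<Rightarrow> nat \<Rightarrow> 'a" where
  "EEpp q m h = (case h of Suc (Suc k) \<Rightarrow> EE q m k | _ \<Rightarrow> 0)"

definition JJ :: "'a::comm_ring_1 \<Rightarrow> nat \<Rightarrow> nat \<Rightarrow> 'a" where
  "JJ q k h = (q ^ h - 1) * EE q k h + (q * q ^ h + qp q h - q - q * q ^ k) * EEp q k h
     + (q ^ h - q * q * q ^ k) * EEpp q k h"

lemma JJ_1: "JJ q (Suc 0) h = 0"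
proof -
  consider "h = 0" | "h = 1" | "h = 2" | "h = 3" | h4 where "h = Suc (Suc (Suc (Suc h4)))"
    by (metis One_nat_def Suc_1 numeral_3_eq_3 not0_implies_Suc)
  then show ?thesis
  proof cases
    case 5 then show ?thesis by (simp add: JJ_def EEp_def EEpp_def qx_def)
  qed (simp_all add: JJ_def EEp_def EEpp_def qp_def qx_def numeral_3_eq_3 eval_nat_numeral algebra_simps)
qed

lemma JJ_zero: "k \<ge> 1 \<Longrightarrow> JJ q k h = 0"
proof (induction k arbitrary: h rule: dec_induct)
  case base then show ?case using JJ_1 by simp
next
  case (step k)
  have qx: "qx q (Suc k) = q * q ^ k" using step(1) by (simp add: qx_def)
  consider "h = 0" | "h = 1" | h2 where "h = Suc (Suc h2)"
    by (metis One_nat_def not0_implies_Suc)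
  then show ?case
  proof cases
    case 1 then show ?thesis by (simp add: JJ_def EEp_def EEpp_def)
  next
    case 2
    have "JJ q k 1 = 0" by (rule step(3))
    moreover have "JJ q (Suc k) 1 = JJ q k 1"
      unfolding JJ_def EEp_def EEpp_def qp_def using qx by (simp add: algebra_simps)
    ultimately show ?thesis using 2 by simp
  next
    case 3
    have a: "JJ q k (Suc (Suc h2)) = 0" by (rule step(3))
    have b: "JJ q k (Suc h2) = 0" by (rule step(3))
    have e1: "EE q (Suc k) (Suc (Suc h2)) = EE q k (Suc (Suc h2)) + q * q ^ k * EE q k (Suc h2)"
      using qx by simp
    have e2: "EE q (Suc k) (Suc h2) = EE q k (Suc h2) + q * q ^ k * EE q k h2"
      using qx by simp
    have e3: "EE q (Suc k) h2 = EE q k h2 + q * q ^ k * EEp q k h2"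
      using qx EE_Suc_gen[of q k h2] by simp
    have "JJ q (Suc k) (Suc (Suc h2)) = JJ q k (Suc (Suc h2)) + q * q * q ^ k * JJ q k (Suc h2)"
      unfolding JJ_def EEp_def EEpp_def qp_def
      apply (simp only: e1 e2 e3 nat.case diff_Suc_Suc minus_nat.diff_0 if_False nat.simps power_Suc add_Suc_right add_0_right)
      apply (cases h2)
       apply (simp add: EEp_def algebra_simps)
      apply (simp add: EEp_def algebra_simps)
      done
    then show ?thesis using a b 3 by simp
  qed
qed

definition cc :: "'a::comm_ring_1 \<Rightarrow> nat \<Rightarrow> 'a" where
  "cc q k = q ^ k * q_int (Suc k) q"

definition pm :: "'a::comm_ring_1 \<Rightarrow> nat \<Rightarrow> 'a" where
  "pm q h = (if h = 0 then 0 else cc q (h - 1))"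

definition AA :: "'a::comm_ring_1 \<Rightarrow> nat \<Rightarrow> nat \<Rightarrow> 'a" where
  "AA q m h = q_int (Suc m) q * EE q (Suc m) h
     - (q * pm q h * EEp q m h + (q * cc q h + pm q h) * EE q m h + cc q h * EE q m (Suc h))"

lemma AA_step:
  assumes "k \<ge> 1"
  shows "AA q (Suc k) h = AA q k h + q * q * q * q ^ k * (if h = 0 then 0 else AA q k (h - 1))
           - q * q ^ k * JJ q k h - q * EE q (Suc k) h * ((1 - q) * q_int k q - 1 + q ^ k)"
proof -
  have qx1: "qx q (Suc k) = q * q ^ k" using assms by (simp add: qx_def)
  have qx2: "qx q (Suc (Suc k)) = q * q * q ^ k" by (simp add: qx_def)
  have E1: "EE q (Suc k) x = EE q k x + q * q ^ k * EEp q k x" for x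
    by (subst EE_Suc_gen) (simp add: qx1)
  have E2: "EE q (Suc (Suc k)) x = EE q (Suc k) x + q * q * q ^ k * EEp q (Suc k) x" for x
    by (subst EE_Suc_gen) (simp add: qx2)
  consider "h = 0" | "h = 1" | h2 where "h = Suc (Suc h2)"
    by (metis One_nat_def not0_implies_Suc)
  then show ?thesis
  proof cases
    case 1
    show ?thesis unfolding 1 AA_def JJ_def pm_def cc_def EEp_def EEpp_def qp_def
      by (simp add: E1 E2 qx1 qx2 EEp_def q_int_Suc' algebra_simps)
  next
    case 2
    show ?thesis unfolding 2 AA_def JJ_def pm_def cc_def EEp_def EEpp_def qp_def
      by (simp add: E1 E2 qx1 qx2 EEp_def q_int_Suc' algebra_simps)
  next
    case 3
    show ?thesis unfolding 3 AA_def JJ_def pm_def cc_def EEpp_def qp_def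
      by (simp add: E1 E2 qx1 qx2 EEp_def q_int_Suc' algebra_simps)
  qed
qed

lemma AA_1: "AA q (Suc 0) h = 0"
proof -
  consider "h = 0" | "h = 1" | "h = 2" | h3 where "h = Suc (Suc (Suc h3))"
    by (metis One_nat_def Suc_1 not0_implies_Suc)
  then show ?thesis
  proof cases
    case 4 then show ?thesis by (simp add: AA_def EEp_def qx_def EE_ge)
  qed (simp_all add: AA_def EEp_def qx_def pm_def cc_def q_int_Suc' eval_nat_numeral algebra_simps)
qed

lemma AA_zero: "m \<ge> 1 \<Longrightarrow> AA q m h = 0"
proof (induction m arbitrary: h rule: dec_induct)
  case base then show ?case using AA_1 by simp
next
  case (step k)
  have "JJ q k h = 0" using JJ_zero[OF step(1)] by blast
  then show ?case using AA_step[OF step(1), of q h] step(3) q_int_mul[of q k]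
    by simp
qed

lemma EE_rec:
  assumes "m \<ge> 1"
  shows "q_int (Suc m) q * EE q (Suc m) h
     = q * pm q h * EEp q m h + (q * cc q h + pm q h) * EE q m h + cc q h * EE q m (Suc h)"
  using AA_zero[OF assms, of q h] unfolding AA_def by simp



type_synonym blk = "nat list \<times> bool"

definition sepb :: "blk \<Rightarrow> nat \<Rightarrow> bool" where
  "sepb B i = ((\<exists>x\<in>set (fst B). x < i) \<and> (snd B \<or> (\<exists>y\<in>set (fst B). i < y)))"

definition clsb :: "blk \<Rightarrow> nat \<Rightarrow> cls" where
  "clsb B i = (if snd B then (if i = hd (fst B) then Op else Cont)
     else if length (fst B) = 1 then Sing else if i = hd (fst B) then Op
     else if i = last (fst B) then Clos else Cont)"

definition ind :: "bool \<Rightarrow> nat" where "ind P = (if P then 1 else 0)"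

definition lc :: "(cls \<Rightarrow> nat) \<Rightarrow> blk \<Rightarrow> blk \<Rightarrow> nat" where
  "lc al B C = sum_list (map (\<lambda>i. al (clsb C i) * ind (sepb B i)) (fst C))"

definition rc :: "(cls \<Rightarrow> nat) \<Rightarrow> blk \<Rightarrow> blk \<Rightarrow> nat" where
  "rc be B C = sum_list (map (\<lambda>i. be (clsb B i) * ind (sepb C i)) (fst B))"

definition pw :: "(cls \<Rightarrow> nat) \<Rightarrow> (cls \<Rightarrow> nat) \<Rightarrow> blk \<Rightarrow> blk \<Rightarrow> nat" where
  "pw al be B C = lc al B C + rc be B C"

fun wp :: "(cls \<Rightarrow> nat) \<Rightarrow> (cls \<Rightarrow> nat) \<Rightarrow> blk list \<Rightarrow> nat" where
  "wp al be [] = 0"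
| "wp al be (B # Bs) = sum_list (map (pw al be B) Bs) + wp al be Bs"

definition nopen :: "blk list \<Rightarrow> nat" where
  "nopen P = length (filter snd P)"

fun insN :: "bool \<Rightarrow> nat \<Rightarrow> bool \<Rightarrow> blk list \<Rightarrow> blk list list" where
  "insN fl m a [] = (if a then [[([m], fl)]] else [])"
| "insN fl m a (B # Bs) = (if a then [([m], fl) # B # Bs] else []) @ map ((#) B) (insN fl m (snd B) Bs)"

fun insA :: "bool \<Rightarrow> nat \<Rightarrow> blk list \<Rightarrow> blk list list" where
  "insA fl m [] = []"
| "insA fl m (B # Bs) = (if snd B then [(fst B @ [m], fl) # Bs] else []) @ map ((#) B) (insA fl m Bs)"

definition good :: "nat \<Rightarrow> blk list \<Rightarrow> bool" where
  "good m Bs = (\<forall>B\<in>set Bs. fst B \<noteq> [] \<and> (\<forall>x\<in>set (fst B). x < m))"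

lemma nopen_Cons [simp]: "nopen (B # Bs) = ind (snd B) + nopen Bs"
  by (simp add: nopen_def ind_def)

lemma nopen_Nil [simp]: "nopen [] = 0"
  by (simp add: nopen_def)

lemma insN_mset: "P \<in> set (insN fl m a Bs) \<Longrightarrow> mset P = add_mset ([m], fl) (mset Bs)"
  by (induction Bs arbitrary: a P) (auto split: if_splits)

lemma insN_len: "P \<in> set (insN fl m a Bs) \<Longrightarrow> length P = Suc (length Bs)"
  by (induction Bs arbitrary: a P) (auto split: if_splits)

lemma insN_nopen: "P \<in> set (insN fl m a Bs) \<Longrightarrow> nopen P = ind fl + nopen Bs"
  by (induction Bs arbitrary: a P) (auto split: if_splits)

lemma insA_len: "P \<in> set (insA fl m Bs) \<Longrightarrow> length P = length Bs"
  by (induction Bs arbitrary: P) (auto split: if_splits)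

lemma insA_nopen: "P \<in> set (insA fl m Bs) \<Longrightarrow> nopen P + 1 = ind fl + nopen Bs"
  by (induction Bs arbitrary: P) (auto split: if_splits simp: ind_def)

definition clsN :: "bool \<Rightarrow> cls" where "clsN fl = (if fl then Op else Sing)"
definition clsA :: "bool \<Rightarrow> cls" where "clsA fl = (if fl then Cont else Clos)"

lemma sepb_m: "fst B \<noteq> [] \<Longrightarrow> \<forall>x\<in>set (fst B). x < m \<Longrightarrow> sepb B m = snd B"
  unfolding sepb_def by (cases "fst B") auto

lemma sepb_N: "i \<le> m \<Longrightarrow> sepb ([m], fl) i = False"
  unfolding sepb_def by auto

lemma pw_B_N:
  assumes "fst B \<noteq> []" "\<forall>x\<in>set (fst B). x < m"
  shows "pw al be B ([m], fl) = al (clsN fl) * ind (snd B)"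
proof -
  have "rc be B ([m], fl) = 0"
    unfolding rc_def using assms(2) by (auto simp: sepb_N ind_def intro!: sum_list_eq_0_iff[THEN iffD2])
  moreover have "lc al B ([m], fl) = al (clsN fl) * ind (snd B)"
    unfolding lc_def using sepb_m[OF assms] by (simp add: clsb_def clsN_def)
  ultimately show ?thesis by (simp add: pw_def)
qed

lemma pw_N_C:
  assumes "fst C \<noteq> []" "\<forall>x\<in>set (fst C). x < m"
  shows "pw al be ([m], fl) C = be (clsN fl) * ind (snd C)"
proof -
  have "lc al ([m], fl) C = 0"
    unfolding lc_def using assms(2) by (auto simp: sepb_N ind_def intro!: sum_list_eq_0_iff[THEN iffD2])
  moreover have "rc be ([m], fl) C = be (clsN fl) * ind (snd C)"
    unfolding rc_def using sepb_m[OF assms] by (simp add: clsb_def clsN_def)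
  ultimately show ?thesis by (simp add: pw_def)
qed

lemma sum_list_as_mset: "sum_list (map f xs) = sum_mset (image_mset f (mset xs))"
  by (induction xs) auto

lemma sum_list_mset_eq: "mset xs = mset ys \<Longrightarrow> sum_list (map (f::_\<Rightarrow>'b::comm_monoid_add) xs) = sum_list (map f ys)"
  by (simp add: sum_list_as_mset)

lemma good_Cons [simp]: "good m (B # Bs) = (fst B \<noteq> [] \<and> (\<forall>x\<in>set (fst B). x < m) \<and> good m Bs)"
  by (auto simp: good_def)

lemma insN_wp:
  assumes "good m Bs"
  shows "map (wp al be) (insN fl m a Bs) =
    map (\<lambda>l. wp al be Bs + al (clsN fl) * l + be (clsN fl) * (nopen Bs - l))
        [(if a then 0 else 1)..<Suc (nopen Bs)]"
  using assms
proof (induction Bs arbitrary: a)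
  case Nil then show ?case by simp
next
  case (Cons B Bs)
  let ?N = "([m], fl)"
  let ?A = "al (clsN fl)" and ?Bc = "be (clsN fl)"
  let ?S = "sum_list (map (pw al be B) Bs)"
  let ?h = "nopen Bs"
  have gB: "fst B \<noteq> []" "\<forall>x\<in>set (fst B). x < m" and gBs: "good m Bs" using Cons.prems by auto
  have IH: "map (wp al be) (insN fl m (snd B) Bs) =
    map (\<lambda>l. wp al be Bs + ?A * l + ?Bc * (?h - l)) [(if snd B then 0 else 1)..<Suc ?h]"
    using Cons.IH[OF gBs] .
  have tl1: "map (wp al be) (map ((#) B) (insN fl m (snd B) Bs))
      = map (\<lambda>w. ?S + ?A * ind (snd B) + w) (map (wp al be) (insN fl m (snd B) Bs))"
  proof -
    have "wp al be (B # P) = ?S + ?A * ind (snd B) + wp al be P" if "P \<in> set (insN fl m (snd B) Bs)" for P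
    proof -
      have "mset P = mset (?N # Bs)" using insN_mset[OF that] by simp
      then have "sum_list (map (pw al be B) P) = sum_list (map (pw al be B) (?N # Bs))"
        by (rule sum_list_mset_eq)
      then show ?thesis using pw_B_N[OF gB, of al be fl] by simp
    qed
    then show ?thesis by simp
  qed
  have tl2: "map (\<lambda>w. ?S + ?A * ind (snd B) + w) (map (wp al be) (insN fl m (snd B) Bs))
     = map (\<lambda>l. wp al be (B # Bs) + ?A * l + ?Bc * (nopen (B # Bs) - l)) [1..<Suc (nopen (B # Bs))]"
  proof (cases "snd B")
    case True
    have "[1..<Suc (nopen (B # Bs))] = map Suc [0..<Suc ?h]" using True
      by (simp add: ind_def map_Suc_upt)
    have "map (\<lambda>w. ?S + ?A * ind (snd B) + w)
        (map (\<lambda>l. wp al be Bs + ?A * l + ?Bc * (?h - l)) [0..<Suc ?h])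
      = map (\<lambda>l. wp al be (B # Bs) + ?A * l + ?Bc * (nopen (B # Bs) - l)) (map Suc [0..<Suc ?h])"
      unfolding map_map using True by (intro map_cong) (auto simp: ind_def algebra_simps)
    then show ?thesis unfolding IH using True \<open>[1..<Suc (nopen (B # Bs))] = map Suc [0..<Suc ?h]\<close>
      by (simp only: if_True)
  next
    case False
    have "map (\<lambda>w. ?S + ?A * ind (snd B) + w)
        (map (\<lambda>l. wp al be Bs + ?A * l + ?Bc * (?h - l)) [1..<Suc ?h])
      = map (\<lambda>l. wp al be (B # Bs) + ?A * l + ?Bc * (nopen (B # Bs) - l)) [1..<Suc ?h]"
      unfolding map_map using False by (intro map_cong) (auto simp: ind_def algebra_simps)
    then show ?thesis unfolding IH using False by (simp add: ind_def)
  qed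
  have front: "wp al be (?N # B # Bs) = wp al be (B # Bs) + ?Bc * nopen (B # Bs)"
  proof -
    have "sum_list (map (pw al be ?N) (B # Bs)) = ?Bc * nopen (B # Bs)"
      using Cons.prems
    proof (induction Bs arbitrary: B)
      case Nil then show ?case using pw_N_C[of B m al be fl] by simp
    next
      case (Cons C Cs)
      then show ?case using pw_N_C[of B m al be fl] by (simp add: algebra_simps)
    qed
    then show ?thesis by simp
  qed
  have split: "map (wp al be) (insN fl m a (B # Bs)) = (if a then [wp al be (?N # B # Bs)] else [])
     @ map (wp al be) (map ((#) B) (insN fl m (snd B) Bs))" by simp
  show ?case
  proof (cases a)
    case True
    have u: "[(if a then 0 else 1)..<Suc (nopen (B # Bs))] = 0 # [1..<Suc (nopen (B # Bs))]"
      using True by (simp only: if_True upt_conv_Cons[of 0 "Suc (nopen (B # Bs))"] zero_less_Suc) simp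
    show ?thesis unfolding split u tl1 tl2 using True front by simp
  next
    case False
    show ?thesis unfolding split tl1 tl2 using False by simp
  qed
qed

lemma clsb_app:
  assumes "b \<noteq> []" "\<forall>x\<in>set b. x < m" "i \<in> set b"
  shows "clsb (b @ [m], fl) i = clsb (b, True) i"
  using assms by (cases b) (auto simp: clsb_def)

lemma clsb_app_m:
  assumes "b \<noteq> []" "\<forall>x\<in>set b. x < m"
  shows "clsb (b @ [m], fl) m = clsA fl"
  using assms by (cases b) (auto simp: clsb_def clsA_def)

lemma sepb_app:
  assumes "b \<noteq> []" "i < m"
  shows "sepb (b @ [m], fl) i = sepb (b, True) i"
  using assms by (auto simp: sepb_def)

lemma pw_D_app:
  assumes "b \<noteq> []" "\<forall>x\<in>set b. x < m" "fst D \<noteq> []" "\<forall>x\<in>set (fst D). x < m"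
  shows "pw al be D (b @ [m], fl) = pw al be D (b, True) + al (clsA fl) * ind (snd D)"
proof -
  have "lc al D (b @ [m], fl) = lc al D (b, True) + al (clsA fl) * ind (snd D)"
  proof -
    have "map (\<lambda>i. al (clsb (b @ [m], fl) i) * ind (sepb D i)) b
        = map (\<lambda>i. al (clsb (b, True) i) * ind (sepb D i)) b"
      using clsb_app[OF assms(1,2)] by (intro map_cong) auto
    note eq = this
    show ?thesis unfolding lc_def fst_conv map_append sum_list_append eq
      using clsb_app_m[OF assms(1,2)] sepb_m[OF assms(3,4)] by simp
  qed
  moreover have "rc be D (b @ [m], fl) = rc be D (b, True)"
    unfolding rc_def using sepb_app[OF assms(1)] assms(4) by (intro arg_cong[where f=sum_list] map_cong) auto
  ultimately show ?thesis by (simp add: pw_def)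
qed

lemma pw_app_C:
  assumes "b \<noteq> []" "\<forall>x\<in>set b. x < m" "fst C \<noteq> []" "\<forall>x\<in>set (fst C). x < m"
  shows "pw al be (b @ [m], fl) C = pw al be (b, True) C + be (clsA fl) * ind (snd C)"
proof -
  have "rc be (b @ [m], fl) C = rc be (b, True) C + be (clsA fl) * ind (snd C)"
  proof -
    have "map (\<lambda>i. be (clsb (b @ [m], fl) i) * ind (sepb C i)) b
        = map (\<lambda>i. be (clsb (b, True) i) * ind (sepb C i)) b"
      using clsb_app[OF assms(1,2)] by (intro map_cong) auto
    note eq = this
    show ?thesis unfolding rc_def fst_conv map_append sum_list_append eq
      using clsb_app_m[OF assms(1,2)] sepb_m[OF assms(3,4)] by simp
  qed
  moreover have "lc al (b @ [m], fl) C = lc al (b, True) C"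
    unfolding lc_def using sepb_app[OF assms(1)] assms(4) by (intro arg_cong[where f=sum_list] map_cong) auto
  ultimately show ?thesis by (simp add: pw_def)
qed

lemma insA_sum_D:
  assumes "good m Bs" "fst D \<noteq> []" "\<forall>x\<in>set (fst D). x < m" "P \<in> set (insA fl m Bs)"
  shows "sum_list (map (pw al be D) P) = sum_list (map (pw al be D) Bs) + al (clsA fl) * ind (snd D)"
  using assms
proof (induction Bs arbitrary: P)
  case Nil then show ?case by simp
next
  case (Cons B Bs)
  from Cons.prems(4) consider "snd B" "P = (fst B @ [m], fl) # Bs" | R where "R \<in> set (insA fl m Bs)" "P = B # R"
    by (auto split: if_splits)
  then show ?case
  proof cases
    case 1
    have "B = (fst B, True)" using 1 by (cases B) auto
    then have "pw al be D (fst B @ [m], fl) = pw al be D B + al (clsA fl) * ind (snd D)"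
      using pw_D_app[of "fst B" m D al be fl] Cons.prems by auto
    then show ?thesis using 1 by simp
  next
    case 2
    then show ?thesis using Cons by simp
  qed
qed

lemma insA_wp:
  assumes "good m Bs"
  shows "map (wp al be) (insA fl m Bs) =
    map (\<lambda>l. wp al be Bs + al (clsA fl) * l + be (clsA fl) * (nopen Bs - 1 - l)) [0..<nopen Bs]"
  using assms
proof (induction Bs)
  case Nil then show ?case by simp
next
  case (Cons B Bs)
  let ?A = "al (clsA fl)" and ?Bc = "be (clsA fl)"
  let ?S = "sum_list (map (pw al be B) Bs)"
  let ?h = "nopen Bs"
  have gB: "fst B \<noteq> []" "\<forall>x\<in>set (fst B). x < m" and gBs: "good m Bs" using Cons.prems by auto
  have IH: "map (wp al be) (insA fl m Bs) =
    map (\<lambda>l. wp al be Bs + ?A * l + ?Bc * (?h - 1 - l)) [0..<?h]" using Cons.IH[OF gBs] .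
  have tl1: "map (wp al be) (map ((#) B) (insA fl m Bs))
      = map (\<lambda>w. ?S + ?A * ind (snd B) + w) (map (wp al be) (insA fl m Bs))"
    using insA_sum_D[OF gBs gB, of _ fl al be] by simp
  have split: "map (wp al be) (insA fl m (B # Bs)) = (if snd B then [wp al be ((fst B @ [m], fl) # Bs)] else [])
     @ map (wp al be) (map ((#) B) (insA fl m Bs))" by simp
  show ?case
  proof (cases "snd B")
    case True
    have Bt: "B = (fst B, True)" using True by (cases B) auto
    have front: "wp al be ((fst B @ [m], fl) # Bs) = wp al be (B # Bs) + ?Bc * ?h"
    proof -
      have "sum_list (map (pw al be (fst B @ [m], fl)) Bs) = ?S + ?Bc * ?h"
        using gBs
      proof (induction Bs)
        case Nil then show ?case by simp
      next
        case (Cons C Cs)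
        then show ?case using pw_app_C[OF gB, of C al be fl] Bt by (simp add: algebra_simps)
      qed
      then show ?thesis by simp
    qed
    have u: "[0..<nopen (B # Bs)] = 0 # map Suc [0..<?h]"
      using True by (simp add: ind_def map_Suc_upt upt_conv_Cons)
    have "map (\<lambda>w. ?S + ?A * ind (snd B) + w)
        (map (\<lambda>l. wp al be Bs + ?A * l + ?Bc * (?h - 1 - l)) [0..<?h])
      = map (\<lambda>l. wp al be (B # Bs) + ?A * l + ?Bc * (nopen (B # Bs) - 1 - l)) (map Suc [0..<?h])"
      unfolding map_map using True by (intro map_cong) (auto simp: ind_def algebra_simps)
    then show ?thesis unfolding split tl1 IH u using True front by (simp add: ind_def)
  next
    case False
    have "map (\<lambda>w. ?S + ?A * ind (snd B) + w)
        (map (\<lambda>l. wp al be Bs + ?A * l + ?Bc * (?h - 1 - l)) [0..<?h])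
      = map (\<lambda>l. wp al be (B # Bs) + ?A * l + ?Bc * (nopen (B # Bs) - 1 - l)) [0..<?h]"
      unfolding map_map using False by (intro map_cong) (auto simp: ind_def algebra_simps)
    then show ?thesis unfolding split tl1 IH using False by (simp add: ind_def)
  qed
qed

lemma pos_sum:
  assumes "(a, b) \<in> {(2::nat, 1::nat), (1, 2)}"
  shows "sum_list (map (\<lambda>l. (q::'a::comm_ring_1) ^ (a * l + b * (h - l))) [0..<Suc h]) = cc q h"
proof -
  have "sum_list (map (\<lambda>l. q ^ (a * l + b * (h - l))) [0..<Suc h]) = (\<Sum>l<Suc h. q ^ (a * l + b * (h - l)))"
    by (simp add: interv_sum_list_conv_sum_set_nat atLeast0LessThan)
  also have "\<dots> = q ^ h * (\<Sum>l<Suc h. q ^ l)"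
  proof (cases "a = 2")
    case True
    then have "b = 1" using assms by auto
    have "(\<Sum>l<Suc h. q ^ (a * l + b * (h - l))) = (\<Sum>l<Suc h. q ^ h * q ^ l)"
      by (intro sum.cong) (auto simp: True \<open>b = 1\<close> power_add[symmetric] add.commute)
    then show ?thesis by (simp only: sum_distrib_left)
  next
    case False
    then have ab: "a = 1" "b = 2" using assms by auto
    have "(\<Sum>l<Suc h. q ^ (a * l + b * (h - l))) = (\<Sum>l<Suc h. q ^ h * q ^ (h - l))"
    proof (intro sum.cong refl)
      fix x assume "x \<in> {..<Suc h}"
      then have "a * x + b * (h - x) = h + (h - x)" using ab by auto
      then show "q ^ (a * x + b * (h - x)) = q ^ h * q ^ (h - x)" by (simp add: power_add)
    qed
    also have "\<dots> = q ^ h * (\<Sum>l<Suc h. q ^ (Suc h - Suc l))"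
      by (simp only: sum_distrib_left diff_Suc_Suc)
    also have "(\<Sum>l<Suc h. q ^ (Suc h - Suc l)) = (\<Sum>l<Suc h. q ^ l)"
      by (rule sum.nat_diff_reindex)
    finally show ?thesis .
  qed
  finally show ?thesis by (simp add: cc_def q_int_def)
qed

definition wt :: "(cls \<Rightarrow> nat) \<Rightarrow> (cls \<Rightarrow> nat) \<Rightarrow> blk list \<Rightarrow> nat" where
  "wt al be P = (length P - 1) + wp al be P"

definition insAll :: "nat \<Rightarrow> blk list \<Rightarrow> blk list list" where
  "insAll m P = insN True m True P @ insN False m True P @ insA True m P @ insA False m P"

fun objs :: "nat \<Rightarrow> blk list list" where
  "objs 0 = [[]]"
| "objs (Suc m) = concat (map (insAll (Suc m)) (objs m))"

definition ab_ok :: "(cls \<Rightarrow> nat) \<Rightarrow> (cls \<Rightarrow> nat) \<Rightarrow> bool" where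
  "ab_ok al be = (\<forall>X. (al X, be X) \<in> {(2, 1), (1, 2)})"

lemma insN_sum:
  assumes "good m P" "P \<noteq> []" "ab_ok al be"
  shows "sum_list (map (\<lambda>P'. (q::'a::comm_ring_1) ^ (wt al be P')) (insN fl m True P))
     = q ^ (wt al be P) * (q * cc q (nopen P))"
proof -
  let ?A = "al (clsN fl)" and ?B = "be (clsN fl)" and ?h = "nopen P"
  have "map (\<lambda>P'. q ^ (wt al be P')) (insN fl m True P)
      = map (\<lambda>w. q ^ (length P + w)) (map (wp al be) (insN fl m True P))"
    by (auto simp: wt_def insN_len)
  also have "\<dots> = map (\<lambda>l. q ^ (length P + wp al be P) * q ^ (?A * l + ?B * (?h - l))) [0..<Suc ?h]"
    unfolding insN_wp[OF assms(1)] map_map by (intro map_cong refl) (auto simp: power_add ac_simps)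
  finally have "sum_list (map (\<lambda>P'. q ^ (wt al be P')) (insN fl m True P))
      = q ^ (length P + wp al be P) * sum_list (map (\<lambda>l. q ^ (?A * l + ?B * (?h - l))) [0..<Suc ?h])"
    by (simp only: sum_list_const_mult)
  also have "sum_list (map (\<lambda>l. q ^ (?A * l + ?B * (?h - l))) [0..<Suc ?h]) = cc q ?h"
    using assms(3) by (intro pos_sum) (auto simp: ab_ok_def)
  also have "q ^ (length P + wp al be P) = q * q ^ (wt al be P)"
    using assms(2) by (cases P) (auto simp: wt_def)
  finally show ?thesis by (simp add: algebra_simps)
qed

lemma insA_sum:
  assumes "good m P" "ab_ok al be"
  shows "sum_list (map (\<lambda>P'. (q::'a::comm_ring_1) ^ (wt al be P')) (insA fl m P))
     = q ^ (wt al be P) * pm q (nopen P)"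
proof -
  let ?A = "al (clsA fl)" and ?B = "be (clsA fl)" and ?h = "nopen P"
  have "map (\<lambda>P'. q ^ (wt al be P')) (insA fl m P)
      = map (\<lambda>w. q ^ (length P - 1 + w)) (map (wp al be) (insA fl m P))"
    by (auto simp: wt_def insA_len)
  also have "\<dots> = map (\<lambda>l. q ^ (wt al be P) * q ^ (?A * l + ?B * (?h - 1 - l))) [0..<?h]"
    unfolding insA_wp[OF assms(1)] map_map by (intro map_cong refl) (auto simp: power_add ac_simps wt_def)
  finally have eq: "sum_list (map (\<lambda>P'. q ^ (wt al be P')) (insA fl m P))
      = q ^ (wt al be P) * sum_list (map (\<lambda>l. q ^ (?A * l + ?B * (?h - 1 - l))) [0..<?h])"
    by (simp only: sum_list_const_mult)
  show ?thesis
  proof (cases ?h)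
    case 0 then show ?thesis using eq by (simp add: pm_def)
  next
    case (Suc k)
    have "sum_list (map (\<lambda>l. q ^ (?A * l + ?B * (?h - 1 - l))) [0..<?h]) = cc q k"
      unfolding Suc using assms(2) by (simp only: diff_Suc_1) (intro pos_sum, auto simp: ab_ok_def)
    then show ?thesis using eq Suc by (simp add: pm_def)
  qed
qed

lemma good_mono: "good m Bs \<Longrightarrow> m \<le> m' \<Longrightarrow> good m' Bs"
  by (fastforce simp: good_def)

lemma insN_good: "good m Bs \<Longrightarrow> P \<in> set (insN fl m a Bs) \<Longrightarrow> good (Suc m) P"
proof -
  assume g: "good m Bs" and P: "P \<in> set (insN fl m a Bs)"
  have "set P = insert ([m], fl) (set Bs)"
    using arg_cong[OF insN_mset[OF P], of set_mset] by simp
  then show ?thesis using g by (fastforce simp: good_def)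
qed

lemma insA_good: "good m Bs \<Longrightarrow> P \<in> set (insA fl m Bs) \<Longrightarrow> good (Suc m) P"
proof (induction Bs arbitrary: P)
  case Nil then show ?case by simp
next
  case (Cons B Bs)
  then show ?case using good_mono[of m Bs "Suc m"] by (auto split: if_splits simp: less_Suc_eq)
qed

lemma insAll_good: "good m Bs \<Longrightarrow> P \<in> set (insAll m Bs) \<Longrightarrow> good (Suc m) P"
  unfolding insAll_def using insN_good insA_good by auto

lemma objs_good: "P \<in> set (objs m) \<Longrightarrow> good (Suc m) P"
proof (induction m arbitrary: P)
  case 0 then show ?case by (simp add: good_def)
next
  case (Suc m)
  then obtain P0 where "P0 \<in> set (objs m)" "P \<in> set (insAll (Suc m) P0)" by auto
  then show ?case using Suc.IH insAll_good by blast
qed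

lemma insA_ne: "P \<in> set (insA fl m Bs) \<Longrightarrow> P \<noteq> []"
  using insA_len by fastforce

lemma objs_ne: "P \<in> set (objs (Suc m)) \<Longrightarrow> P \<noteq> []"
  by (auto simp: insAll_def dest: insN_len insA_ne)

definition W :: "(cls \<Rightarrow> nat) \<Rightarrow> (cls \<Rightarrow> nat) \<Rightarrow> 'a::comm_ring_1 \<Rightarrow> nat \<Rightarrow> nat \<Rightarrow> 'a" where
  "W al be q m h = sum_list (map (\<lambda>P. if nopen P = h then q ^ (wt al be P) else 0) (objs m))"

lemma sum_filter_const:
  assumes "\<And>P'. P' \<in> set L \<Longrightarrow> nopen P' = c"
  shows "sum_list (map (\<lambda>P'. if nopen P' = h then (q::'a::comm_ring_1) ^ (wt al be P') else 0) L)
     = (if c = h then sum_list (map (\<lambda>P'. q ^ (wt al be P')) L) else 0)"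
proof -
  have "map (\<lambda>P'. if nopen P' = h then q ^ (wt al be P') else 0) L
      = map (\<lambda>P'. if c = h then q ^ (wt al be P') else 0) L"
    using assms by (intro map_cong) auto
  note eq = this
  show ?thesis unfolding eq by (cases "c = h") simp_all
qed

definition contrib :: "'a::comm_ring_1 \<Rightarrow> nat \<Rightarrow> nat \<Rightarrow> 'a" where
  "contrib q h h' = (if Suc h' = h then q * cc q h' else 0) + (if h' = h then q * cc q h' + pm q h' else 0)
     + (if h' = Suc h then pm q h' else 0)"

lemma insAll_sum:
  assumes "good m P" "P \<noteq> []" "ab_ok al be"
  shows "sum_list (map (\<lambda>P'. if nopen P' = h then (q::'a::comm_ring_1) ^ (wt al be P') else 0) (insAll m P))
     = q ^ (wt al be P) * contrib q h (nopen P)"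
proof -
  let ?f = "\<lambda>P'. if nopen P' = h then q ^ (wt al be P') else 0"
  have s1: "sum_list (map ?f (insN True m True P)) = (if Suc (nopen P) = h then q ^ (wt al be P) * (q * cc q (nopen P)) else 0)"
    using sum_filter_const[of "insN True m True P" "Suc (nopen P)" h q al be] insN_sum[OF assms, of q True]
      insN_nopen[of _ True m True P] by (simp add: ind_def)
  have s2: "sum_list (map ?f (insN False m True P)) = (if nopen P = h then q ^ (wt al be P) * (q * cc q (nopen P)) else 0)"
    using sum_filter_const[of "insN False m True P" "nopen P" h q al be] insN_sum[OF assms, of q False]
      insN_nopen[of _ False m True P] by (simp add: ind_def)
  have s3: "sum_list (map ?f (insA True m P)) = (if nopen P = h then q ^ (wt al be P) * pm q (nopen P) else 0)"
    using sum_filter_const[of "insA True m P" "nopen P" h q al be] insA_sum[OF assms(1,3), of q True]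
      insA_nopen[of _ True m P] by (simp add: ind_def)
  have s4: "sum_list (map ?f (insA False m P)) = (if nopen P = Suc h then q ^ (wt al be P) * pm q (nopen P) else 0)"
  proof (cases "nopen P")
    case 0
    then have "insA False m P = []" using insA_nopen[of _ False m P] by (cases "insA False m P") (auto simp: ind_def)
    then show ?thesis using 0 by simp
  next
    case (Suc k)
    show ?thesis
      using sum_filter_const[of "insA False m P" k h q al be] insA_sum[OF assms(1,3), of q False]
        insA_nopen[of _ False m P] Suc by (simp add: ind_def)
  qed
  show ?thesis unfolding insAll_def map_append sum_list_append s1 s2 s3 s4 contrib_def
    by (simp add: algebra_simps)
qed

lemma sum_list_map_concat: "sum_list (map f (concat xss)) = sum_list (map (\<lambda>xs. sum_list (map f xs)) xss)"
  by (induction xss) auto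

lemma W_sel:
  "sum_list (map (\<lambda>P. (q::'a::comm_ring_1) ^ (wt al be P) * (if nopen P = k then c else 0)) (objs m)) = W al be q m k * c"
proof -
  have "map (\<lambda>P. q ^ (wt al be P) * (if nopen P = k then c else 0)) (objs m)
      = map (\<lambda>P. (if nopen P = k then q ^ (wt al be P) else 0) * c) (objs m)"
    by (intro map_cong) auto
  then show ?thesis unfolding W_def by (simp only: sum_list_mult_const)
qed

lemma contrib_alt: "contrib q h h' = (case h of 0 \<Rightarrow> 0 | Suc k \<Rightarrow> (if h' = k then q * pm q h else 0))
   + (if h' = h then q * cc q h + pm q h else 0) + (if h' = Suc h then cc q h else 0)"
  by (cases h) (auto simp: contrib_def pm_def)

lemma W_rec:
  assumes "m \<ge> 1" "ab_ok al be"
  shows "W al be q (Suc m) h = q * pm q h * (if h = 0 then 0 else W al be q m (h - 1))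
     + (q * cc q h + pm q h) * W al be q m h + cc q h * W al be q m (Suc h)"
proof -
  let ?f = "\<lambda>P'. if nopen P' = h then q ^ (wt al be P') else 0"
  have "W al be q (Suc m) h = sum_list (map (\<lambda>P. sum_list (map ?f (insAll (Suc m) P))) (objs m))"
    unfolding W_def objs.simps sum_list_map_concat map_map by (simp add: o_def)
  also have "\<dots> = sum_list (map (\<lambda>P. q ^ (wt al be P) * contrib q h (nopen P)) (objs m))"
  proof (intro arg_cong[where f=sum_list] map_cong refl)
    fix P assume P: "P \<in> set (objs m)"
    obtain m' where m': "m = Suc m'" using assms(1) by (cases m) auto
    show "sum_list (map ?f (insAll (Suc m) P)) = q ^ (wt al be P) * contrib q h (nopen P)"
      using insAll_sum[OF objs_good[OF P] _ assms(2)] objs_ne P m' by blast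
  qed
  also have "\<dots> = sum_list (map (\<lambda>P. q ^ (wt al be P) * (case h of 0 \<Rightarrow> 0 | Suc k \<Rightarrow> (if nopen P = k then q * pm q h else 0))) (objs m))
     + sum_list (map (\<lambda>P. q ^ (wt al be P) * (if nopen P = h then q * cc q h + pm q h else 0)) (objs m))
     + sum_list (map (\<lambda>P. q ^ (wt al be P) * (if nopen P = Suc h then cc q h else 0)) (objs m))"
    unfolding contrib_alt by (simp add: distrib_left sum_list_addf)
  also have "sum_list (map (\<lambda>P. q ^ (wt al be P) * (case h of 0 \<Rightarrow> 0 | Suc k \<Rightarrow> (if nopen P = k then q * pm q h else 0))) (objs m))
     = q * pm q h * (if h = 0 then 0 else W al be q m (h - 1))"
  proof (cases h)
    case 0 then show ?thesis by simp
  next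
    case (Suc k) then show ?thesis using W_sel[of q al be k "q * pm q h" m] by (simp add: algebra_simps)
  qed
  finally show ?thesis using W_sel[of q al be h "q * cc q h + pm q h" m] W_sel[of q al be "Suc h" "cc q h" m]
    by (simp add: algebra_simps)
qed

lemma q_fact_Suc: "q_fact (Suc m) q = q_fact m q * q_int (Suc m) q"
  by (simp add: q_fact_def)

lemma W_closed:
  assumes "m \<ge> 1" "ab_ok al be"
  shows "W al be q m h = q_fact m q * EE q m h"
  using assms(1)
proof (induction m arbitrary: h rule: dec_induct)
  case base
  have o1: "objs 1 = [[([1], True)], [([1], False)]]" by (simp add: insAll_def One_nat_def)
  show ?case
    unfolding W_def o1 by (cases h) (auto simp: wt_def nopen_def q_fact_def q_int_def qx_def)
next
  case (step m)
  have "W al be q (Suc m) h = q_fact m q * (q * pm q h * EEp q m h + (q * cc q h + pm q h) * EE q m h + cc q h * EE q m (Suc h))"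
    unfolding W_rec[OF step(1) assms(2)] step(3) by (cases h) (auto simp: EEp_def pm_def algebra_simps)
  also have "\<dots> = q_fact (Suc m) q * EE q (Suc m) h"
    unfolding EE_rec[OF step(1), symmetric] q_fact_Suc by (simp add: algebra_simps)
  finally show ?case .
qed

definition rem :: "nat \<Rightarrow> blk list \<Rightarrow> blk list" where
  "rem m P = concat (map (\<lambda>B. if fst B = [m] then [] else if m \<in> set (fst B) then [(butlast (fst B), True)] else [B]) P)"

lemma rem_Cons: "rem m (B # P) = (if fst B = [m] then [] else if m \<in> set (fst B) then [(butlast (fst B), True)] else [B]) @ rem m P"
  by (simp add: rem_def)

lemma rem_id: "good m Bs \<Longrightarrow> rem m Bs = Bs"
  by (induction Bs) (simp add: rem_def, auto simp: rem_Cons)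

lemma rem_insN: "good m Bs \<Longrightarrow> P \<in> set (insN fl m a Bs) \<Longrightarrow> rem m P = Bs"
proof (induction Bs arbitrary: a P)
  case Nil then show ?case by (auto simp: rem_def split: if_splits)
next
  case (Cons B Bs)
  have nB: "fst B \<noteq> [m]" "m \<notin> set (fst B)" using Cons.prems(1) by auto
  from Cons.prems(2) show ?case
    using Cons.IH Cons.prems(1) rem_id[OF Cons.prems(1)] nB
    by (auto simp: rem_Cons split: if_splits)
qed

lemma rem_insA: "good m Bs \<Longrightarrow> P \<in> set (insA fl m Bs) \<Longrightarrow> rem m P = Bs"
proof (induction Bs arbitrary: P)
  case Nil then show ?case by simp
next
  case (Cons B Bs)
  have nB: "fst B \<noteq> [m]" "m \<notin> set (fst B)" "fst B \<noteq> []" using Cons.prems(1) by auto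
  from Cons.prems(2) consider "snd B" "P = (fst B @ [m], fl) # Bs" | R where "R \<in> set (insA fl m Bs)" "P = B # R"
    by (auto split: if_splits)
  then show ?case
  proof cases
    case 1
    have "fst B @ [m] \<noteq> [m]" using nB by simp
    then show ?thesis using 1 rem_id[of m Bs] Cons.prems(1) by (cases B) (auto simp: rem_Cons)
  next
    case 2
    then show ?thesis using Cons.IH[of R] Cons.prems(1) nB by (auto simp: rem_Cons)
  qed
qed

lemma rem_insAll: "good m Bs \<Longrightarrow> P \<in> set (insAll m Bs) \<Longrightarrow> rem m P = Bs"
  unfolding insAll_def using rem_insN rem_insA by auto

lemma insN_distinct: "good m Bs \<Longrightarrow> distinct (insN fl m a Bs)"
proof (induction Bs arbitrary: a)
  case Nil then show ?case by simp
next
  case (Cons B Bs)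
  have "([m], fl) \<noteq> B" using Cons.prems by (cases B) auto
  then show ?case using Cons by (auto simp: distinct_map)
qed

lemma insA_distinct: "good m Bs \<Longrightarrow> distinct (insA fl m Bs)"
proof (induction Bs)
  case Nil then show ?case by simp
next
  case (Cons B Bs)
  have "(fst B @ [m], fl) \<noteq> B" by (cases B) auto
  then show ?case using Cons by (auto simp: distinct_map)
qed

lemma insAll_distinct: "good m Bs \<Longrightarrow> distinct (insAll m Bs)"
proof -
  assume g: "good m Bs"
  have d: "set (insN True m True Bs) \<inter> set (insN False m True Bs) = {}"
    using insN_nopen[of _ True m True Bs] insN_nopen[of _ False m True Bs] by (fastforce simp: ind_def)
  have e: "set (insN fl m True Bs) \<inter> set (insA fl' m Bs) = {}" for fl fl'
    using insN_len[of _ fl m True Bs] insA_len[of _ fl' m Bs] by fastforce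
  have f: "set (insA True m Bs) \<inter> set (insA False m Bs) = {}"
    using insA_nopen[of _ True m Bs] insA_nopen[of _ False m Bs] by (fastforce simp: ind_def)
  show ?thesis unfolding insAll_def using g d e f insN_distinct insA_distinct by auto
qed

lemma insAll_ne: "insAll m Bs \<noteq> []"
  by (cases Bs) (auto simp: insAll_def)

lemma objs_distinct: "distinct (objs m)"
proof (induction m)
  case 0 then show ?case by simp
next
  case (Suc m)
  have g: "good (Suc m) P" if "P \<in> set (objs m)" for P using objs_good[OF that] .
  have inj: "inj_on (insAll (Suc m)) (set (objs m))"
  proof (rule inj_onI)
    fix P1 P2 assume P: "P1 \<in> set (objs m)" "P2 \<in> set (objs m)" "insAll (Suc m) P1 = insAll (Suc m) P2"
    obtain x where x: "x \<in> set (insAll (Suc m) P1)" using insAll_ne by (metis list.set_intros(1) neq_Nil_conv)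
    then have "x \<in> set (insAll (Suc m) P2)" using P(3) by simp
    then show "P1 = P2" using rem_insAll[OF g[OF P(1)] x] rem_insAll[OF g[OF P(2)]] by simp
  qed
  show ?case unfolding objs.simps
  proof (rule distinct_concat)
    show "distinct (map (insAll (Suc m)) (objs m))" using Suc inj by (simp add: distinct_map)
  next
    fix ys assume "ys \<in> set (map (insAll (Suc m)) (objs m))"
    then show "distinct ys" using insAll_distinct g by auto
  next
    fix ys zs assume "ys \<in> set (map (insAll (Suc m)) (objs m))" "zs \<in> set (map (insAll (Suc m)) (objs m))" "ys \<noteq> zs"
    then obtain P1 P2 where "P1 \<in> set (objs m)" "P2 \<in> set (objs m)" "ys = insAll (Suc m) P1" "zs = insAll (Suc m) P2" "P1 \<noteq> P2"
      by auto
    then show "set ys \<inter> set zs = {}" using rem_insAll g by blast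
  qed
qed

definition adjp :: "blk \<Rightarrow> blk \<Rightarrow> bool" where
  "adjp B1 B2 = (snd B1 \<or> hd (fst B2) < last (fst B1))"

fun adj :: "blk list \<Rightarrow> bool" where
  "adj [] = True"
| "adj [B] = True"
| "adj (B1 # B2 # Bs) = (adjp B1 B2 \<and> adj (B2 # Bs))"

lemma adj_tl: "adj (B # Bs) \<Longrightarrow> adj Bs"
  by (cases Bs) auto

lemma insN_adj0:
  "good m (B0 # Bs) \<Longrightarrow> adj (B0 # Bs) \<Longrightarrow> P \<in> set (insN fl m (snd B0) Bs) \<Longrightarrow> adj (B0 # P)"
proof (induction Bs arbitrary: B0 P)
  case Nil then show ?case by (auto simp: adjp_def split: if_splits)
next
  case (Cons B Bs)
  from Cons.prems(3) consider "snd B0" "P = ([m], fl) # B # Bs" | R where "R \<in> set (insN fl m (snd B) Bs)" "P = B # R"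
    by (auto split: if_splits)
  then show ?case
  proof cases
    case 1
    have "hd (fst B) < m" using Cons.prems(1) by (cases "fst B") auto
    then show ?thesis using 1 Cons.prems(2) by (auto simp: adjp_def)
  next
    case 2
    have "adj (B # R)" using Cons.IH[of B R] Cons.prems 2 by simp
    then show ?thesis using 2 Cons.prems(2) by simp
  qed
qed

lemma insN_adj: "good m Bs \<Longrightarrow> adj Bs \<Longrightarrow> P \<in> set (insN fl m True Bs) \<Longrightarrow> adj P"
proof (cases Bs)
  case Nil
  assume "P \<in> set (insN fl m True Bs)" then show ?thesis using Nil by simp
next
  case (Cons B Bs')
  assume g: "good m Bs" and a: "adj Bs" and P: "P \<in> set (insN fl m True Bs)"
  from P Cons consider "P = ([m], fl) # B # Bs'" | R where "R \<in> set (insN fl m (snd B) Bs')" "P = B # R"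
    by auto
  then show ?thesis
  proof cases
    case 1
    have "hd (fst B) < m" using g Cons by (cases "fst B") auto
    then show ?thesis using 1 a Cons by (auto simp: adjp_def)
  next
    case 2
    then show ?thesis using insN_adj0[of m B Bs' R fl] g a Cons by simp
  qed
qed

lemma adjp_app: "fst B \<noteq> [] \<Longrightarrow> adjp B0 (fst B @ [m], fl) = adjp B0 B"
  by (cases "fst B") (auto simp: adjp_def)

lemma adj_app_front: "good m (B # Bs) \<Longrightarrow> adj (B # Bs) \<Longrightarrow> adj ((fst B @ [m], fl) # Bs)"
proof (cases Bs)
  case Nil then show ?thesis by simp
next
  case (Cons B2 Bs2)
  assume "good m (B # Bs)" "adj (B # Bs)"
  moreover have "hd (fst B2) < m" using \<open>good m (B # Bs)\<close> Cons by (cases "fst B2") auto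
  ultimately show ?thesis using Cons by (auto simp: adjp_def)
qed

lemma insA_adj0:
  "good m (B0 # Bs) \<Longrightarrow> adj (B0 # Bs) \<Longrightarrow> P \<in> set (insA fl m Bs) \<Longrightarrow> adj (B0 # P)"
proof (induction Bs arbitrary: B0 P)
  case Nil then show ?case by simp
next
  case (Cons B Bs)
  from Cons.prems(3) consider "snd B" "P = (fst B @ [m], fl) # Bs" | R where "R \<in> set (insA fl m Bs)" "P = B # R"
    by (auto split: if_splits)
  then show ?case
  proof cases
    case 1
    have "fst B \<noteq> []" using Cons.prems(1) by simp
    moreover have "adj ((fst B @ [m], fl) # Bs)" using adj_app_front[of m B Bs fl] Cons.prems(1,2) by simp
    ultimately show ?thesis using 1 Cons.prems(2) adjp_app[of B B0 m fl] by simp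
  next
    case 2
    have "adj (B # R)" using Cons.IH[of B R] Cons.prems 2 by simp
    then show ?thesis using 2 Cons.prems(2) by simp
  qed
qed

lemma insA_adj: "good m Bs \<Longrightarrow> adj Bs \<Longrightarrow> P \<in> set (insA fl m Bs) \<Longrightarrow> adj P"
proof (cases Bs)
  case Nil
  assume "P \<in> set (insA fl m Bs)" then show ?thesis using Nil by simp
next
  case (Cons B Bs')
  assume g: "good m Bs" and a: "adj Bs" and P: "P \<in> set (insA fl m Bs)"
  from P Cons consider "P = (fst B @ [m], fl) # Bs'" | R where "R \<in> set (insA fl m Bs')" "P = B # R"
    by (auto split: if_splits)
  then show ?thesis
  proof cases
    case 1
    then show ?thesis using adj_app_front[of m B Bs' fl] g a Cons by simp
  next
    case 2
    then show ?thesis using insA_adj0[of m B Bs' R fl] g a Cons by simp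
  qed
qed

definition cat :: "blk list \<Rightarrow> nat list" where
  "cat P = concat (map fst P)"

lemma cat_mset: "mset (cat P) = sum_mset (image_mset (mset \<circ> fst) (mset P))"
  by (induction P) (auto simp: cat_def)

lemma insN_cat: "P \<in> set (insN fl m a Bs) \<Longrightarrow> mset (cat P) = add_mset m (mset (cat Bs))"
  by (simp add: cat_mset insN_mset)

lemma insA_cat: "P \<in> set (insA fl m Bs) \<Longrightarrow> mset (cat P) = add_mset m (mset (cat Bs))"
proof (induction Bs arbitrary: P)
  case Nil then show ?case by simp
next
  case (Cons B Bs) then show ?case by (auto simp: cat_def split: if_splits)
qed

lemma insN_sorted: "good m Bs \<Longrightarrow> (\<forall>B\<in>set Bs. sorted_wrt (<) (fst B)) \<Longrightarrow> P \<in> set (insN fl m a Bs)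
   \<Longrightarrow> \<forall>B\<in>set P. sorted_wrt (<) (fst B)"
proof -
  assume "P \<in> set (insN fl m a Bs)" "\<forall>B\<in>set Bs. sorted_wrt (<) (fst B)"
  moreover have "set P = insert ([m], fl) (set Bs)"
    using arg_cong[OF insN_mset[OF \<open>P \<in> set (insN fl m a Bs)\<close>], of set_mset] by simp
  ultimately show ?thesis by auto
qed

lemma insA_sorted: "good m Bs \<Longrightarrow> (\<forall>B\<in>set Bs. sorted_wrt (<) (fst B)) \<Longrightarrow> P \<in> set (insA fl m Bs)
   \<Longrightarrow> \<forall>B\<in>set P. sorted_wrt (<) (fst B)"
proof (induction Bs arbitrary: P)
  case Nil then show ?case by simp
next
  case (Cons B Bs)
  from Cons.prems(3) consider "P = (fst B @ [m], fl) # Bs" | R where "R \<in> set (insA fl m Bs)" "P = B # R"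
    by (auto split: if_splits)
  then show ?case
  proof cases
    case 1 then show ?thesis using Cons.prems(1,2) by (auto simp: sorted_wrt_append)
  next
    case 2 then show ?thesis using Cons.IH[of R] Cons.prems(1,2) by auto
  qed
qed

definition valid :: "nat \<Rightarrow> blk list \<Rightarrow> bool" where
  "valid m P = (mset (cat P) = mset [1..<Suc m] \<and> (\<forall>B\<in>set P. sorted_wrt (<) (fst B)) \<and> adj P)"

lemma objs_valid: "P \<in> set (objs m) \<Longrightarrow> valid m P"
proof (induction m arbitrary: P)
  case 0 then show ?case by (simp add: valid_def cat_def)
next
  case (Suc m)
  then obtain P0 where P0: "P0 \<in> set (objs m)" "P \<in> set (insAll (Suc m) P0)" by auto
  have g: "good (Suc m) P0" using objs_good[OF P0(1)] .
  have v: "valid m P0" using Suc.IH[OF P0(1)] .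
  have "mset (cat P) = add_mset (Suc m) (mset (cat P0))"
    using P0(2) insN_cat insA_cat unfolding insAll_def by auto
  then have ms: "mset (cat P) = mset [1..<Suc (Suc m)]" using v by (simp add: valid_def)
  have cs: "P \<in> set (insN True (Suc m) True P0) \<or> P \<in> set (insN False (Suc m) True P0)
     \<or> P \<in> set (insA True (Suc m) P0) \<or> P \<in> set (insA False (Suc m) P0)"
    using P0(2) by (simp add: insAll_def)
  have v': "\<forall>B\<in>set P0. sorted_wrt (<) (fst B)" "adj P0" using v by (auto simp: valid_def)
  moreover have "\<forall>B\<in>set P. sorted_wrt (<) (fst B)"
    using cs insN_sorted[OF g v'(1)] insA_sorted[OF g v'(1)] by blast
  moreover have "adj P"
    using cs insN_adj[OF g v'(2)] insA_adj[OF g v'(2)] by blast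
  ultimately show ?case using ms by (simp only: valid_def)
qed

lemma runs_app: "b \<noteq> [] \<Longrightarrow> sorted_wrt (<) b \<Longrightarrow> (rest = [] \<or> hd rest < last b)
   \<Longrightarrow> runs (b @ rest) = b # runs rest"
proof (induction b rule: induct_list012)
  case 1 then show ?case by simp
next
  case (2 x)
  then show ?case by (cases rest) auto
next
  case (3 x y zs)
  have IH: "runs ((y # zs) @ rest) = (y # zs) # runs rest" using 3 by simp
  have "x < y" using 3(4) by simp
  then show ?case using IH by (simp add: Let_def)
qed

lemma runs_cat: "nopen P = 0 \<Longrightarrow> (\<forall>B\<in>set P. fst B \<noteq> [] \<and> sorted_wrt (<) (fst B)) \<Longrightarrow> adj P
   \<Longrightarrow> runs (cat P) = map fst P"
proof (induction P)
  case Nil then show ?case by (simp add: cat_def)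
next
  case (Cons B P)
  have sB: "\<not> snd B" "nopen P = 0" using Cons.prems(1) by (auto simp: ind_def split: if_splits)
  have IH: "runs (cat P) = map fst P" using Cons.IH sB(2) Cons.prems(2,3) adj_tl by auto
  have "cat P = [] \<or> hd (cat P) < last (fst B)"
  proof (cases P)
    case Nil then show ?thesis by (simp add: cat_def)
  next
    case (Cons B2 P2)
    then have "fst B2 \<noteq> []" using Cons.prems(2) \<open>P = B2 # P2\<close> by simp
    then have "hd (cat P) = hd (fst B2)" using Cons by (simp add: cat_def)
    moreover have "adjp B B2" using Cons.prems(3) Cons by simp
    ultimately show ?thesis using sB(1) by (simp add: adjp_def)
  qed
  then have "runs (fst B @ cat P) = fst B # runs (cat P)"
    using runs_app Cons.prems(2) by simp
  then show ?case using IH by (simp add: cat_def)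
qed

definition wpi :: "(cls \<Rightarrow> nat) \<Rightarrow> (cls \<Rightarrow> nat) \<Rightarrow> blk list \<Rightarrow> nat" where
  "wpi al be P = (\<Sum>j<length P. sum_list (map (\<lambda>i. al (clsb (P ! j) i) * (\<Sum>j'<j. ind (sepb (P ! j') i))
      + be (clsb (P ! j) i) * (\<Sum>j'\<in>{Suc j..<length P}. ind (sepb (P ! j') i))) (fst (P ! j))))"

lemma sum_list_swap_mult:
  "sum_list (map (\<lambda>i. (c i :: nat) * sum_list (map (\<lambda>C. f C i) P)) b)
   = sum_list (map (\<lambda>C. sum_list (map (\<lambda>i. c i * f C i) b)) P)"
proof (induction b)
  case Nil then show ?case by (induction P) auto
next
  case (Cons x b)
  have "sum_list (map (\<lambda>C. sum_list (map (\<lambda>i. c i * f C i) (x # b))) P)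
      = sum_list (map (\<lambda>C. c x * f C x) P) + sum_list (map (\<lambda>C. sum_list (map (\<lambda>i. c i * f C i) b)) P)"
    by (simp add: sum_list_addf)
  then show ?case using Cons by (simp add: sum_list_const_mult)
qed

lemma sum_nth_list: "(\<Sum>j<length P. f (P ! j)) = sum_list (map f P)"
  by (simp add: sum_list_sum_nth atLeast0LessThan)

lemma wpi_wp: "wpi al be P = wp al be P"
proof (induction P)
  case Nil then show ?case by (simp add: wpi_def)
next
  case (Cons B P)
  let ?n = "length P"
  let ?F = "\<lambda>j. sum_list (map (\<lambda>i. al (clsb ((B # P) ! j) i) * (\<Sum>j'<j. ind (sepb ((B # P) ! j') i))
      + be (clsb ((B # P) ! j) i) * (\<Sum>j'\<in>{Suc j..<Suc ?n}. ind (sepb ((B # P) ! j') i))) (fst ((B # P) ! j)))"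
  let ?G = "\<lambda>j. sum_list (map (\<lambda>i. al (clsb (P ! j) i) * (\<Sum>j'<j. ind (sepb (P ! j') i))
      + be (clsb (P ! j) i) * (\<Sum>j'\<in>{Suc j..<?n}. ind (sepb (P ! j') i))) (fst (P ! j)))"
  have w: "wpi al be (B # P) = ?F 0 + (\<Sum>j<?n. ?F (Suc j))"
    unfolding wpi_def by (simp only: length_Cons sum.lessThan_Suc_shift)
  have sh: "(\<Sum>j'\<in>{Suc j..<Suc ?n}. g ((B # P) ! j')) = (\<Sum>j'\<in>{j..<?n}. g (P ! j'))" for g :: "blk \<Rightarrow> nat" and j
    by (simp only: sum.shift_bounds_Suc_ivl nth_Cons_Suc)
  have e1: "(\<Sum>j'<Suc j. ind (sepb ((B # P) ! j') i)) = ind (sepb B i) + (\<Sum>j'<j. ind (sepb (P ! j') i))" for i j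
    by (simp only: sum.lessThan_Suc_shift nth_Cons_0 nth_Cons_Suc)
  have sh2: "(\<Sum>j'\<in>{Suc j..<Suc ?n}. ind (sepb ((B # P) ! j') i)) = (\<Sum>j'\<in>{j..<?n}. ind (sepb (P ! j') i))" for i j
    by (simp only: sum.shift_bounds_Suc_ivl nth_Cons_Suc)
  have F0: "?F 0 = sum_list (map (rc be B) P)"
  proof -
    have "?F 0 = sum_list (map (\<lambda>i. be (clsb B i) * sum_list (map (\<lambda>C. ind (sepb C i)) P)) (fst B))"
      using sh[of "\<lambda>C. ind (sepb C _)" 0]
      by (simp add: sum_nth_list[symmetric] atLeast0LessThan)
    also have "\<dots> = sum_list (map (rc be B) P)"
      unfolding sum_list_swap_mult rc_def ..
    finally show ?thesis .
  qed
  have FS: "?F (Suc j) = ?G j + lc al B (P ! j)" if "j < ?n" for j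
  proof -
    have "?F (Suc j) = sum_list (map (\<lambda>i. (al (clsb (P ! j) i) * (\<Sum>j'<j. ind (sepb (P ! j') i))
      + be (clsb (P ! j) i) * (\<Sum>j'\<in>{Suc j..<?n}. ind (sepb (P ! j') i))) + al (clsb (P ! j) i) * ind (sepb B i)) (fst (P ! j)))"
      apply (simp only: e1 sh2 nth_Cons_Suc)
      apply (simp add: algebra_simps del: sum.lessThan_Suc)
      done
    then show ?thesis by (simp only: sum_list_addf lc_def)
  qed
  have "(\<Sum>j<?n. ?F (Suc j)) = (\<Sum>j<?n. ?G j) + (\<Sum>j<?n. lc al B (P ! j))"
    using FS by (simp add: sum.distrib)
  also have "(\<Sum>j<?n. ?G j) = wp al be P" using Cons.IH by (simp add: wpi_def)
  also have "(\<Sum>j<?n. lc al B (P ! j)) = sum_list (map (lc al B) P)" by (rule sum_nth_list)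
  finally have X: "(\<Sum>j<?n. ?F (Suc j)) = wp al be P + sum_list (map (lc al B) P)" .
  have pwsum: "sum_list (map (pw al be B) P) = sum_list (map (lc al B) P) + sum_list (map (rc be B) P)"
    unfolding pw_def by (rule sum_list_addf)
  show ?case unfolding w F0 X wp.simps pwsum by simp
qed

lemma distinct_concat_idx:
  "distinct (concat xs) \<Longrightarrow> j < length xs \<Longrightarrow> j' < length xs \<Longrightarrow> x \<in> set (xs ! j)
   \<Longrightarrow> x \<in> set (xs ! j') \<Longrightarrow> j = j'"
proof (induction xs arbitrary: j j')
  case Nil then show ?case by simp
next
  case (Cons a xs)
  have d: "set a \<inter> set (concat xs) = {}" "distinct (concat xs)" using Cons.prems(1) by auto
  show ?case
  proof (cases j)
    case 0
    then show ?thesis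
    proof (cases j')
      case (Suc k)
      then have "x \<in> set (concat xs)" using Cons.prems(3,5) by (auto simp: set_concat)
      then show ?thesis using d 0 Cons.prems(4) by auto
    qed simp
  next
    case (Suc k)
    then show ?thesis
    proof (cases j')
      case 0
      have "x \<in> set (concat xs)" using Suc Cons.prems(2,4) by (auto simp: set_concat)
      then show ?thesis using d 0 Cons.prems(5) by auto
    next
      case (Suc k')
      then show ?thesis using Cons.IH[OF d(2), of k k'] Cons.prems \<open>j = Suc k\<close> by auto
    qed
  qed
qed

lemma card_ind: "finite A \<Longrightarrow> card {x\<in>A. Q x} = (\<Sum>x\<in>A. ind (Q x))"
  by (simp add: ind_def sum.inter_filter[symmetric])

lemma regroup:
  assumes "finite A"
  shows "(\<Sum>X\<in>{Sing, Cont, Op, Clos}. al X * (\<Sum>i\<in>{i\<in>A. c i = X}. f i) + be X * (\<Sum>i\<in>{i\<in>A. c i = X}. g i))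
    = (\<Sum>i\<in>A. al (c i) * f i + be (c i) * (g i :: nat))"
proof -
  have "(\<Sum>i\<in>A. al (c i) * f i + be (c i) * g i)
      = (\<Sum>i\<in>A. \<Sum>X\<in>{Sing, Cont, Op, Clos}. (if c i = X then al X * f i + be X * g i else 0))"
  proof (intro sum.cong refl)
    fix i show "al (c i) * f i + be (c i) * g i
      = (\<Sum>X\<in>{Sing, Cont, Op, Clos}. (if c i = X then al X * f i + be X * g i else 0))"
      by (cases "c i") simp_all
  qed
  also have "\<dots> = (\<Sum>X\<in>{Sing, Cont, Op, Clos}. \<Sum>i\<in>A. (if c i = X then al X * f i + be X * g i else 0))"
    by (rule sum.swap)
  also have "\<dots> = (\<Sum>X\<in>{Sing, Cont, Op, Clos}. al X * (\<Sum>i\<in>{i\<in>A. c i = X}. f i) + be X * (\<Sum>i\<in>{i\<in>A. c i = X}. g i))"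
    using assms by (intro sum.cong refl) (simp add: sum.inter_filter sum_distrib_left sum.distrib[symmetric] if_distrib cong: if_cong)
  finally show ?thesis by simp
qed

lemma stat_link:
  fixes al be :: "cls \<Rightarrow> nat"
  assumes v: "valid n P" and c: "nopen P = 0" and g: "good (Suc n) P"
  shows "run (cat P) = length P"
    and "(\<Sum>X\<in>{Sing, Cont, Op, Clos}. al X * lsg_cls X (cat P) + be X * rsg_cls X (cat P)) = wp al be P"
proof -
  let ?s = "cat P"
  have blocks: "\<forall>B\<in>set P. fst B \<noteq> [] \<and> sorted_wrt (<) (fst B)" using v g by (auto simp: valid_def good_def)
  have R: "runs ?s = map fst P" using runs_cat[OF c blocks] v by (simp add: valid_def)
  show "run (cat P) = length P" using R by (simp add: run_def)
  have ds: "distinct ?s" using v mset_eq_imp_distinct_iff[of ?s "[1..<Suc n]"] by (simp add: valid_def)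
  have cl: "\<not> snd (P ! j)" if "j < length P" for j
  proof -
    have "filter snd P = []" using c by (simp add: nopen_def)
    then show ?thesis using that by (metis filter_empty_conv nth_mem)
  qed
  have dc: "distinct (concat (map fst P))" using ds by (simp add: cat_def)
  let ?h = "\<lambda>i. al (cls_of ?s i) * lsg ?s i + be (cls_of ?s i) * rsg ?s i"
  have "(\<Sum>X\<in>{Sing, Cont, Op, Clos}. al X * lsg_cls X ?s + be X * rsg_cls X ?s) = (\<Sum>i\<in>set ?s. ?h i)"
    unfolding lsg_cls_def rsg_cls_def by (rule regroup) simp
  also have "\<dots> = sum_list (map ?h ?s)" using ds by (simp add: sum_list_distinct_conv_sum_set)
  also have "\<dots> = sum_list (map (\<lambda>b. sum_list (map ?h b)) (map fst P))"
    unfolding cat_def by (rule sum_list_map_concat)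
  also have "\<dots> = (\<Sum>j<length P. sum_list (map ?h (fst (P ! j))))"
    by (simp add: sum_nth_list[symmetric])
  also have "\<dots> = wpi al be P" unfolding wpi_def
  proof (intro sum.cong refl arg_cong[where f=sum_list] map_cong)
    fix j i assume j: "j \<in> {..<length P}" and i: "i \<in> set (fst (P ! j))"
    have ridx: "run_idx ?s i = j"
      unfolding run_idx_def R
    proof (rule the_equality)
      show "j < length (map fst P) \<and> i \<in> set (map fst P ! j)" using j i by simp
    next
      fix j' assume "j' < length (map fst P) \<and> i \<in> set (map fst P ! j')"
      then show "j' = j" using distinct_concat_idx[OF dc, of j' j i] j i by auto
    qed
    have rj: "runs ?s ! j' = fst (P ! j')" if "j' < length P" for j' using R that by simp
    have sepeq: "separates (runs ?s ! j') i = sepb (P ! j') i" if "j' < length P" for j'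
      using rj[OF that] cl[OF that] by (simp add: separates_def sepb_def)
    have cls: "cls_of ?s i = clsb (P ! j) i"
      unfolding cls_of_def ridx Let_def using rj[of j] cl[of j] j by (simp add: clsb_def)
    have l: "lsg ?s i = (\<Sum>j'<j. ind (sepb (P ! j') i))"
    proof -
      have "{j'. j' < run_idx ?s i \<and> separates (runs ?s ! j') i} = {j'\<in>{..<j}. sepb (P ! j') i}"
        using sepeq j unfolding ridx by auto
      then show ?thesis unfolding lsg_def using card_ind[of "{..<j}" "\<lambda>j'. sepb (P ! j') i"] by simp
    qed
    have r: "rsg ?s i = (\<Sum>j'\<in>{Suc j..<length P}. ind (sepb (P ! j') i))"
    proof -
      have "{j'. run_idx ?s i < j' \<and> j' < length (runs ?s) \<and> separates (runs ?s ! j') i}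
          = {j'\<in>{Suc j..<length P}. sepb (P ! j') i}"
        using sepeq unfolding ridx R by auto
      then show ?thesis unfolding rsg_def using card_ind[of "{Suc j..<length P}" "\<lambda>j'. sepb (P ! j') i"] by simp
    qed
    show "?h i = al (clsb (P ! j) i) * (\<Sum>j'<j. ind (sepb (P ! j') i))
      + be (clsb (P ! j) i) * (\<Sum>j'\<in>{Suc j..<length P}. ind (sepb (P ! j') i))"
      using cls l r by simp
  qed
  also have "\<dots> = wp al be P" by (rule wpi_wp)
  finally show "(\<Sum>X\<in>{Sing, Cont, Op, Clos}. al X * lsg_cls X (cat P) + be X * rsg_cls X (cat P)) = wp al be P" .
qed

lemma sum_list_filter_if: "sum_list (map f (filter p xs)) = sum_list (map (\<lambda>x. if p x then f x else (0::'b::comm_monoid_add)) xs)"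
  by (induction xs) auto

lemma q_fact_one: "q_fact n (1::int) = fact n"
proof -
  have "q_int k (1::int) = of_nat k" for k by (simp add: q_int_def)
  then show ?thesis by (simp add: q_fact_def fact_prod)
qed

lemma count_filter_int: "sum_list (map (\<lambda>P. if p P then (1::int) ^ w P else 0) xs) = int (length (filter p xs))"
  by (induction xs) auto

theorem mainTheorem5:
  fixes \<alpha> \<beta> :: "cls \<Rightarrow> nat" and n :: nat and q :: "'a::comm_ring_1"
  assumes "\<And>X. (\<alpha> X, \<beta> X) \<in> {(2,1), (1,2)}"
    and "n \<ge> 1"
  shows "(\<Sum>\<sigma>\<in>permutations_of_set {1..n}.
            q ^ (run \<sigma> - 1 + (\<Sum>X\<in>{Sing, Cont, Op, Clos}.
                   \<alpha> X * lsg_cls X \<sigma> + \<beta> X * rsg_cls X \<sigma>)))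
         = q_fact n q"
proof -
  have ab: "ab_ok \<alpha> \<beta>" using assms(1) by (simp add: ab_ok_def)
  let ?CL = "filter (\<lambda>P. nopen P = 0) (objs n)"
  let ?F = "\<lambda>\<sigma>. q ^ (run \<sigma> - 1 + (\<Sum>X\<in>{Sing, Cont, Op, Clos}. \<alpha> X * lsg_cls X \<sigma> + \<beta> X * rsg_cls X \<sigma>))"
  obtain n' where n': "n = Suc n'" using assms(2) by (cases n) auto
  have props: "valid n P \<and> good (Suc n) P \<and> P \<noteq> [] \<and> nopen P = 0" if "P \<in> set ?CL" for P
    using that objs_valid objs_good objs_ne[of P n'] n' by auto
  have perm: "cat P \<in> permutations_of_set {1..n}" if "P \<in> set ?CL" for P
  proof -
    have ms: "mset (cat P) = mset [1..<Suc n]" using props[OF that] by (simp add: valid_def)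
    have "set (cat P) = {1..n}" using mset_eq_setD[OF ms] by auto
    moreover have "distinct (cat P)" using mset_eq_imp_distinct_iff[OF ms] by simp
    ultimately show ?thesis by (simp add: permutations_of_set_def)
  qed
  have statw: "?F (cat P) = q ^ (wt \<alpha> \<beta> P)" if "P \<in> set ?CL" for P
    using stat_link(1)[where n=n and P=P] stat_link(2)[where n=n and P=P and al=\<alpha> and be=\<beta>] props[OF that] by (simp add: wt_def)
  have repr: "P = map (\<lambda>r. (r, False)) (runs (cat P))" if "P \<in> set ?CL" for P
  proof -
    have pr: "valid n P" "good (Suc n) P" "nopen P = 0" using props[OF that] by auto
    have blocks: "\<forall>B\<in>set P. fst B \<noteq> [] \<and> sorted_wrt (<) (fst B)" using pr by (auto simp: valid_def good_def)
    have R: "runs (cat P) = map fst P" using runs_cat[OF pr(3) blocks] pr(1) by (simp add: valid_def)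
    have "filter snd P = []" using pr(3) by (simp add: nopen_def)
    then have "\<forall>B\<in>set P. \<not> snd B" by (simp add: filter_empty_conv)
    then have "map (\<lambda>B. (fst B, False)) P = P" by (induction P) auto
    then show ?thesis unfolding R by (simp add: o_def)
  qed
  have inj: "inj_on cat (set ?CL)"
    by (rule inj_onI) (metis repr)
  have dCL: "distinct ?CL" using objs_distinct by simp
  have dmap: "distinct (map cat ?CL)" using dCL inj by (simp add: distinct_map)
  have lenCL: "length ?CL = fact n"
  proof -
    have "W \<alpha> \<beta> (1::int) n 0 = q_fact n (1::int) * EE (1::int) n 0" by (rule W_closed[OF assms(2) ab])
    moreover have "W \<alpha> \<beta> (1::int) n 0 = int (length ?CL)"
      unfolding W_def by (rule count_filter_int)
    ultimately have "int (length ?CL) = fact n" by (simp add: q_fact_one)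
    then show ?thesis by (metis of_nat_eq_iff of_nat_fact)
  qed
  have setEq: "set (map cat ?CL) = permutations_of_set {1..n}"
  proof (rule card_subset_eq)
    show "finite (permutations_of_set {1..n})" by simp
    show "set (map cat ?CL) \<subseteq> permutations_of_set {1..n}" using perm by auto
    show "card (set (map cat ?CL)) = card (permutations_of_set {1..n})"
      using distinct_card[OF dmap] lenCL by simp
  qed
  have "(\<Sum>\<sigma>\<in>permutations_of_set {1..n}. ?F \<sigma>) = (\<Sum>\<sigma>\<in>set (map cat ?CL). ?F \<sigma>)"
    by (simp only: setEq)
  also have "\<dots> = sum_list (map ?F (map cat ?CL))"
    by (rule sum_list_distinct_conv_sum_set[OF dmap, symmetric])
  also have "\<dots> = sum_list (map (\<lambda>P. q ^ (wt \<alpha> \<beta> P)) ?CL)"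
    unfolding map_map
  proof (intro arg_cong[where f=sum_list] map_cong refl)
    fix P assume P: "P \<in> set ?CL"
    show "(?F \<circ> cat) P = q ^ (wt \<alpha> \<beta> P)" unfolding o_apply by (rule statw[OF P])
  qed
  also have "\<dots> = W \<alpha> \<beta> q n 0"
    unfolding W_def sum_list_filter_if ..
  also have "\<dots> = q_fact n q" using W_closed[OF assms(2) ab, of q 0] by simp
  finally show ?thesis .
qed

end
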